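(* Let $X$ be a space with $\omega\subseteq X\subseteq \beta\omega$ (subspace topology), and let $p$ be a free ultrafilter on $\omega$. Let $(C_n:n\in\omega)$ be a sequence of nonempty, finite, pairwise disjoint subsets of $\omega$, let $\mathcal G=\{g\in\omega^\omega: g(n)\in C_n \text{ for all } n\in\omega\}$, and let $Z_p=\{p\text{-}\lim g: g\in\mathcal G\}$, where the $p$-limits are taken in $\beta\omega$. Regarding each $C_n$ as a point of $\operatorname{CL}(X)$, the following are equivalent: (1) the sequence $(C_n:n\in\omega)$ has a $p$-limit in $\operatorname{CL}(X)$; (2) $\operatorname{cl}_X Z_p$ is the $p$-limit of $(C_n:n\in\omega)$ in $\operatorname{CL}(X)$; (3) $Z_p\subseteq X$. Moreover, if $|C_n|\le |C_{n+1}|$ for every $n\in\omega$ and $|C_n|\to\infty$, then $|Z_p|=\mathfrak c$.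
   Context: $\beta\omega$ is the Stone–Čech compactification of the discrete space $\omega$, identified with the set of ultrafilters on $\omega$ (points of $\omega$ being the principal ultrafilters); $\omega^*=\beta\omega\setminus\omega$ is the set of free ultrafilters. For a space $Y$, $\operatorname{CL}(Y)$ is the set of nonempty closed subsets of $Y$ with the Vietoris topology, generated by the sets $A^+=\{F\in\operatorname{CL}(Y):F\subseteq A\}$ and $A^-=\{F\in\operatorname{CL}(Y):F\cap A\neq\emptyset\}$ for $A\subseteq Y$ open. For $p\in\omega^*$ and a sequence $(y_n:n\in\omega)$ of points of a space $Y$, a point $y\in Y$ is a $p$-limit of the sequence ($y=p\text{-}\lim y_n$) if $\{n\in\omega: y_n\in W\}\in p$ for every neighborhood $W$ of $y$. *)

theory Defs
  imports "HOL-Analysis.Analysis"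
begin

definition ultrafilter_on_nat :: "nat set set \<Rightarrow> bool" where
  "ultrafilter_on_nat U \<longleftrightarrow>
     UNIV \<in> U \<and> {} \<notin> U \<and>
     (\<forall>A B. A \<in> U \<and> B \<in> U \<longrightarrow> A \<inter> B \<in> U) \<and>
     (\<forall>A B. A \<in> U \<and> A \<subseteq> B \<longrightarrow> B \<in> U) \<and>
     (\<forall>A. A \<in> U \<or> - A \<in> U)"

definition free_ultrafilter :: "nat set set \<Rightarrow> bool" where
  "free_ultrafilter U \<longleftrightarrow> ultrafilter_on_nat U \<and> (\<forall>n. {n} \<notin> U)"

text \<open>beta omega as the set of ultrafilters; points of omega are principal ultrafilters.\<close>
definition beta_omega :: "nat set set set" where
  "beta_omega = {U. ultrafilter_on_nat U}"

definition principal :: "nat \<Rightarrow> nat set set" where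
  "principal n = {A. n \<in> A}"

definition beta_top :: "nat set set topology" where
  "beta_top = topology_generated_by {{U \<in> beta_omega. A \<in> U} | A. True}"

definition CL :: "'a topology \<Rightarrow> 'a set set" where
  "CL T = {F. closedin T F \<and> F \<noteq> {}}"

definition vietoris :: "'a topology \<Rightarrow> 'a set topology" where
  "vietoris T = topology_generated_by
     ({{F \<in> CL T. F \<subseteq> A} | A. openin T A} \<union> {{F \<in> CL T. F \<inter> A \<noteq> {}} | A. openin T A})"

definition plim :: "'a topology \<Rightarrow> nat set set \<Rightarrow> 'a \<Rightarrow> (nat \<Rightarrow> 'a) \<Rightarrow> bool" where
  "plim T p y s \<longleftrightarrow> y \<in> topspace T \<and>
     (\<forall>W. openin T W \<and> y \<in> W \<longrightarrow> {n. s n \<in> W} \<in> p)"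

end

theory Submission
  imports Defs "HOL-Library.Equipollence" "HOL-Library.Nat_Bijection"
begin


definition img :: "nat set set \<Rightarrow> (nat \<Rightarrow> nat) \<Rightarrow> nat set set" where
  "img p g = {A. {n. g n \<in> A} \<in> p}"

definition bas :: "nat set \<Rightarrow> nat set set set" where
  "bas A = {U \<in> beta_omega. A \<in> U}"

lemma uf_principal: "ultrafilter_on_nat (principal n)"
  unfolding ultrafilter_on_nat_def principal_def by auto

lemma uf_img: "ultrafilter_on_nat p \<Longrightarrow> ultrafilter_on_nat (img p g)"
proof -
  assume u: "ultrafilter_on_nat p"
  have e1: "{n. g n \<in> A \<inter> B} = {n. g n \<in> A} \<inter> {n. g n \<in> B}" for A B by auto
  have e2: "{n. g n \<in> - A} = - {n. g n \<in> A}" for A by auto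
  have e3: "A \<subseteq> B \<Longrightarrow> {n. g n \<in> A} \<subseteq> {n. g n \<in> B}" for A B by auto
  show ?thesis unfolding ultrafilter_on_nat_def img_def mem_Collect_eq e1 e2
  proof (intro conjI allI impI)
    show "{n. g n \<in> UNIV} \<in> p" using u unfolding ultrafilter_on_nat_def by simp
    show "{n. g n \<in> {}} \<notin> p" using u unfolding ultrafilter_on_nat_def by simp
    fix A B
    show "{n. g n \<in> A} \<in> p \<and> {n. g n \<in> B} \<in> p \<Longrightarrow> {n. g n \<in> A} \<inter> {n. g n \<in> B} \<in> p"
      using u unfolding ultrafilter_on_nat_def by blast
    show "{n. g n \<in> A} \<in> p \<and> A \<subseteq> B \<Longrightarrow> {n. g n \<in> B} \<in> p"
      using u e3[of A B] unfolding ultrafilter_on_nat_def by blast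
  next
    fix A show "{n. g n \<in> A} \<in> p \<or> - {n. g n \<in> A} \<in> p"
      using u unfolding ultrafilter_on_nat_def by blast
  qed
qed

lemma uf_sub_eq: "ultrafilter_on_nat x \<Longrightarrow> ultrafilter_on_nat y \<Longrightarrow> x \<subseteq> y \<Longrightarrow> x = y"
proof (rule ccontr)
  assume ux: "ultrafilter_on_nat x" and uy: "ultrafilter_on_nat y" and s: "x \<subseteq> y" and "x \<noteq> y"
  then obtain A where "A \<in> y" "A \<notin> x" by blast
  then have "- A \<in> y" using ux s unfolding ultrafilter_on_nat_def by blast
  then have "A \<inter> - A \<in> y" using \<open>A \<in> y\<close> uy unfolding ultrafilter_on_nat_def by blast
  then show False using uy unfolding ultrafilter_on_nat_def by simp
qed

lemma uf_neq: "ultrafilter_on_nat x \<Longrightarrow> ultrafilter_on_nat y \<Longrightarrow> x \<noteq> y \<Longrightarrow> \<exists>A. A \<in> x \<and> A \<notin> y"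
  using uf_sub_eq by blast

lemma topspace_beta: "topspace beta_top = beta_omega"
  unfolding beta_top_def topology_generated_by_topspace
proof (rule equalityI)
  show "\<Union> {{U \<in> beta_omega. A \<in> U} |A. True} \<subseteq> beta_omega" by blast
  show "beta_omega \<subseteq> \<Union> {{U \<in> beta_omega. A \<in> U} |A. True}"
  proof
    fix x assume x: "x \<in> beta_omega"
    then have "UNIV \<in> x" unfolding beta_omega_def ultrafilter_on_nat_def by simp
    then have "x \<in> {U \<in> beta_omega. UNIV \<in> U}" using x by simp
    then show "x \<in> \<Union> {{U \<in> beta_omega. A \<in> U} |A. True}" by blast
  qed
qed

lemma open_bas: "openin beta_top (bas A)"
  unfolding beta_top_def bas_def by (rule topology_generated_by_Basis) blast

lemma gen_base:
  assumes "generate_topology_on {{U \<in> beta_omega. A \<in> U} | A. True} W"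
  shows "y \<in> W \<Longrightarrow> y \<in> beta_omega \<Longrightarrow> \<exists>A. A \<in> y \<and> bas A \<subseteq> W"
  using assms
proof (induction arbitrary: y)
  case Empty then show ?case by simp
next
  case (Int a b)
  then obtain A B where "A \<in> y" "bas A \<subseteq> a" "B \<in> y" "bas B \<subseteq> b" by (metis IntD1 IntD2)
  moreover have "A \<inter> B \<in> y" using Int.prems calculation unfolding beta_omega_def ultrafilter_on_nat_def by blast
  moreover have "bas (A \<inter> B) \<subseteq> bas A \<inter> bas B"
    unfolding bas_def beta_omega_def ultrafilter_on_nat_def by auto
  ultimately show ?case by blast
next
  case (UN K)
  then obtain k where "k \<in> K" "y \<in> k" by blast
  with UN show ?case by blast
next
  case (Basis s)
  then show ?case unfolding bas_def by auto
qed

lemma open_base: "openin beta_top W \<Longrightarrow> y \<in> W \<Longrightarrow> \<exists>A. A \<in> y \<and> bas A \<subseteq> W"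
proof -
  assume o: "openin beta_top W" and y: "y \<in> W"
  have "y \<in> beta_omega" using openin_subset[OF o] y topspace_beta by blast
  moreover have "generate_topology_on {{U \<in> beta_omega. A \<in> U} | A. True} W"
    using o unfolding beta_top_def by (rule openin_topology_generated_by)
  ultimately show ?thesis using gen_base y by blast
qed

lemma plim_beta:
  assumes p: "ultrafilter_on_nat p"
  shows "plim beta_top p z (\<lambda>n. principal (g n)) \<longleftrightarrow> z = img p g"
proof
  assume h: "plim beta_top p z (\<lambda>n. principal (g n))"
  then have zb: "z \<in> beta_omega" unfolding plim_def topspace_beta by blast
  have "z \<subseteq> img p g"
  proof
    fix A assume "A \<in> z"
    then have "z \<in> bas A" using zb unfolding bas_def by auto
    then have "{n. principal (g n) \<in> bas A} \<in> p" using h open_bas unfolding plim_def by blast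
    moreover have "{n. principal (g n) \<in> bas A} = {n. g n \<in> A}"
      unfolding bas_def beta_omega_def using uf_principal by (auto simp: principal_def)
    ultimately show "A \<in> img p g" unfolding img_def by simp
  qed
  then show "z = img p g" using uf_sub_eq uf_img p zb unfolding beta_omega_def by blast
next
  assume z: "z = img p g"
  have zb: "z \<in> beta_omega" using z uf_img p unfolding beta_omega_def by blast
  show "plim beta_top p z (\<lambda>n. principal (g n))"
    unfolding plim_def topspace_beta
  proof (intro conjI zb allI impI)
    fix W assume "openin beta_top W \<and> z \<in> W"
    then obtain A where A: "A \<in> z" "bas A \<subseteq> W" using open_base by blast
    have "{n. g n \<in> A} \<subseteq> {n. principal (g n) \<in> W}"
      using A(2) uf_principal unfolding bas_def beta_omega_def principal_def by auto
    moreover have "{n. g n \<in> A} \<in> p" using A z unfolding img_def by simp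
    ultimately show "{n. principal (g n) \<in> W} \<in> p" using p unfolding ultrafilter_on_nat_def by blast
  qed
qed

lemma t1_beta: "t1_space beta_top"
  unfolding t1_space_def topspace_beta
proof (intro ballI impI)
  fix x y assume "x \<in> beta_omega" "y \<in> beta_omega" "x \<noteq> y"
  then obtain A where "A \<in> x" "A \<notin> y" using uf_neq unfolding beta_omega_def by blast
  then show "\<exists>U. openin beta_top U \<and> x \<in> U \<and> y \<notin> U"
    using open_bas \<open>x \<in> beta_omega\<close> unfolding bas_def by blast
qed

lemma plim_gen:
  assumes p: "ultrafilter_on_nat p" and y: "y \<in> \<Union>S"
    and b: "\<And>b. b \<in> S \<Longrightarrow> y \<in> b \<Longrightarrow> {n. s n \<in> b} \<in> p"
  shows "plim (topology_generated_by S) p y s"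
proof -
  have "generate_topology_on S W \<Longrightarrow> y \<in> W \<longrightarrow> {n. s n \<in> W} \<in> p" for W
  proof (induction rule: generate_topology_on.induct)
    case Empty then show ?case by simp
  next
    case (Int a b)
    have "{n. s n \<in> a \<inter> b} = {n. s n \<in> a} \<inter> {n. s n \<in> b}" by auto
    then show ?case using Int p unfolding ultrafilter_on_nat_def by auto
  next
    case (UN K)
    show ?case
    proof
      assume "y \<in> \<Union>K"
      then obtain k where "k \<in> K" "y \<in> k" by blast
      then have "{n. s n \<in> k} \<in> p" using UN by blast
      moreover have "{n. s n \<in> k} \<subseteq> {n. s n \<in> \<Union>K}" using \<open>k \<in> K\<close> by auto
      ultimately show "{n. s n \<in> \<Union>K} \<in> p" using p unfolding ultrafilter_on_nat_def by blast
    qed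
  next
    case (Basis s) then show ?case using b by blast
  qed
  then show ?thesis unfolding plim_def using y openin_topology_generated_by by auto
qed

lemma free_finite: assumes fp: "free_ultrafilter p" shows "finite A \<Longrightarrow> A \<notin> p"
proof (induction A rule: finite_induct)
  case empty then show ?case using fp unfolding free_ultrafilter_def ultrafilter_on_nat_def by blast
next
  case (insert a A)
  show ?case
  proof
    assume "insert a A \<in> p"
    moreover have "- A \<in> p" using insert fp unfolding free_ultrafilter_def ultrafilter_on_nat_def by blast
    ultimately have "insert a A \<inter> - A \<in> p" using fp unfolding free_ultrafilter_def ultrafilter_on_nat_def by blast
    moreover have "insert a A \<inter> - A \<subseteq> {a}" by auto
    ultimately have "{a} \<in> p" using fp unfolding free_ultrafilter_def ultrafilter_on_nat_def by blast
    then show False using fp unfolding free_ultrafilter_def by blast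
  qed
qed

lemma free_cofinite: "free_ultrafilter p \<Longrightarrow> finite (- A) \<Longrightarrow> A \<in> p"
  using free_finite unfolding free_ultrafilter_def ultrafilter_on_nat_def by (metis double_complement)



lemma img_distinct:
  assumes p: "ultrafilter_on_nat p"
    and disj: "\<And>m n. m \<noteq> n \<Longrightarrow> C m \<inter> C n = {}"
    and h: "\<And>n. h n \<in> C n" and h': "\<And>n. h' n \<in> C n"
    and M: "{n. h n \<noteq> h' n} \<in> p"
  shows "img p h \<noteq> img p h'"
proof
  assume eq: "img p h = img p h'"
  have pint: "A \<in> p \<Longrightarrow> B \<in> p \<Longrightarrow> A \<inter> B \<in> p" for A B using p unfolding ultrafilter_on_nat_def by blast
  have pmono: "A \<in> p \<Longrightarrow> A \<subseteq> B \<Longrightarrow> B \<in> p" for A B using p unfolding ultrafilter_on_nat_def by blast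
  have pemp: "{} \<notin> p" using p unfolding ultrafilter_on_nat_def by blast
  define M where "M = {n. h n \<noteq> h' n}"
  have Mp: "M \<in> p" using M unfolding M_def .
  have "M \<subseteq> {n. h n \<in> h ` M}" by blast
  then have "{n. h n \<in> h ` M} \<in> p" using Mp pmono by blast
  then have "h ` M \<in> img p h" unfolding img_def by simp
  then have "h ` M \<in> img p h'" using eq by simp
  then have "{n. h' n \<in> h ` M} \<in> p" unfolding img_def by simp
  then have "{n. h' n \<in> h ` M} \<inter> M \<in> p" using Mp pint by blast
  then have "{n. h' n \<in> h ` M} \<inter> M \<noteq> {}" using pemp by force
  then obtain n m where nm: "n \<in> M" "m \<in> M" "h' n = h m" by blast
  have "m = n"
  proof (rule ccontr)
    assume "m \<noteq> n"
    then have "C m \<inter> C n = {}" by (rule disj)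
    moreover have "h m \<in> C m" "h m \<in> C n" using h[of m] h'[of n] nm(3) by auto
    ultimately show False by blast
  qed
  then show False using nm unfolding M_def by simp
qed

lemma set_encode_lessThan: "set_encode {..<k} < 2 ^ k"
proof (induction k)
  case 0 then show ?case by simp
next
  case (Suc k)
  have "{..<Suc k} = insert k {..<k}" by auto
  then have "set_encode {..<Suc k} = 2 ^ k + set_encode {..<k}" by simp
  then show ?case using Suc by simp
qed

lemma set_encode_bound: "set_encode (S \<inter> {..<k}) < 2 ^ k"
proof -
  have "set_encode (S \<inter> {..<k}) \<le> set_encode {..<k}"
    unfolding set_encode_def by (rule sum_mono2) auto
  then show ?thesis using set_encode_lessThan[of k] by linarith
qed

lemma graph_lepoll: "(UNIV :: (nat \<Rightarrow> nat) set) \<lesssim> (UNIV :: nat set set)"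
  unfolding lepoll_def
proof (intro exI conjI)
  define f where "f g = range (\<lambda>n. prod_encode (n, g n))" for g :: "nat \<Rightarrow> nat"
  show "inj_on f UNIV"
  proof (rule inj_onI)
    fix g g' :: "nat \<Rightarrow> nat" assume e: "f g = f g'"
    show "g = g'"
    proof
      fix n
      have "prod_encode (n, g n) \<in> f g'" using e unfolding f_def by auto
      then obtain k where "prod_encode (n, g n) = prod_encode (k, g' k)" unfolding f_def by auto
      then show "g n = g' n" by (auto simp: prod_encode_eq)
    qed
  qed
  show "f ` UNIV \<subseteq> UNIV" by simp
qed



theorem lemma2p1:
  fixes X :: "nat set set set" and p :: "nat set set" and C :: "nat \<Rightarrow> nat set"
  assumes "range principal \<subseteq> X" and "X \<subseteq> beta_omega"
    and "free_ultrafilter p"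
    and "\<And>n. C n \<noteq> {}" and "\<And>n. finite (C n)"
    and "\<And>m n. m \<noteq> n \<Longrightarrow> C m \<inter> C n = {}"
  defines "G \<equiv> {g :: nat \<Rightarrow> nat. \<forall>n. g n \<in> C n}"
  defines "Zp \<equiv> {z. \<exists>g\<in>G. plim beta_top p z (\<lambda>n. principal (g n))}"
  shows "((\<exists>F. plim (vietoris (subtopology beta_top X)) p F (\<lambda>n. principal ` C n))
            \<longleftrightarrow> plim (vietoris (subtopology beta_top X)) p
                   (subtopology beta_top X closure_of Zp) (\<lambda>n. principal ` C n))
       \<and> (plim (vietoris (subtopology beta_top X)) p
                   (subtopology beta_top X closure_of Zp) (\<lambda>n. principal ` C n)
            \<longleftrightarrow> Zp \<subseteq> X)
       \<and> ((\<forall>n. card (C n) \<le> card (C (Suc n))) \<and> filterlim (\<lambda>n. card (C n)) at_top sequentially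
            \<longrightarrow> (\<exists>f. bij_betw f Zp (UNIV :: real set)))"
proof -
  note prX = assms(1) and Xb = assms(2) and fp = assms(3) and Cne = assms(4) and Cfin = assms(5)
    and disj = assms(6)
  have pu: "ultrafilter_on_nat p" using fp unfolding free_ultrafilter_def by simp
  have pemp: "{} \<notin> p" using pu unfolding ultrafilter_on_nat_def by blast
  have pint: "A \<in> p \<Longrightarrow> B \<in> p \<Longrightarrow> A \<inter> B \<in> p" for A B using pu unfolding ultrafilter_on_nat_def by blast
  have pmono: "A \<in> p \<Longrightarrow> A \<subseteq> B \<Longrightarrow> B \<in> p" for A B using pu unfolding ultrafilter_on_nat_def by blast
  have pcompl: "A \<notin> p \<Longrightarrow> - A \<in> p" for A using pu unfolding ultrafilter_on_nat_def by blast
  define T where "T = subtopology beta_top X"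
  define s where "s n = principal ` C n" for n
  define Sg where "Sg = {{F \<in> CL T. F \<subseteq> A} | A. openin T A} \<union> {{F \<in> CL T. F \<inter> A \<noteq> {}} | A. openin T A}"
  have V: "vietoris T = topology_generated_by Sg" unfolding vietoris_def Sg_def by simp
  have tsT: "topspace T = X" unfolding T_def topspace_subtopology topspace_beta using Xb by blast
  have ZpEq: "Zp = img p ` G" unfolding Zp_def using plim_beta[OF pu] by auto
  have princX: "principal m \<in> X" for m using prX by auto
  have openT: "openin T A \<Longrightarrow> \<exists>W. openin beta_top W \<and> A = W \<inter> X" for A
    unfolding T_def by (simp add: openin_subtopology)
  have openT2: "openin beta_top W \<Longrightarrow> openin T (W \<inter> X)" for W
    unfolding T_def by (auto simp: openin_subtopology)
  have t1T: "t1_space T" unfolding T_def using t1_beta by (simp add: t1_space_subtopology)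
  have sCL: "s n \<in> CL T" for n
  proof -
    have "finite (s n)" unfolding s_def using Cfin by simp
    moreover have "s n \<subseteq> topspace T" unfolding s_def tsT using princX by auto
    ultimately have "closedin T (s n)" using t1T t1_space_closedin_finite by blast
    then show ?thesis unfolding CL_def s_def using Cne by auto
  qed
  have UnSg: "\<Union>Sg = CL T"
  proof
    show "\<Union>Sg \<subseteq> CL T" unfolding Sg_def by blast
    show "CL T \<subseteq> \<Union>Sg"
    proof
      fix F assume F: "F \<in> CL T"
      then have "F \<subseteq> topspace T" unfolding CL_def using closedin_subset by blast
      then have "F \<in> {F \<in> CL T. F \<subseteq> topspace T}" using F by simp
      moreover have "{F \<in> CL T. F \<subseteq> topspace T} \<in> Sg"
        unfolding Sg_def by (rule UnI1, rule CollectI, rule exI[of _ "topspace T"], simp)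
      ultimately show "F \<in> \<Union>Sg" by blast
    qed
  qed
  have gen1: "openin T A \<Longrightarrow> openin (vietoris T) {F \<in> CL T. F \<subseteq> A}" for A
    unfolding V Sg_def by (rule topology_generated_by_Basis, rule UnI1, rule CollectI, rule exI[of _ A], simp)
  have gen2: "openin T A \<Longrightarrow> openin (vietoris T) {F \<in> CL T. F \<inter> A \<noteq> {}}" for A
    unfolding V Sg_def by (rule topology_generated_by_Basis, rule UnI2, rule CollectI, rule exI[of _ A], simp)
  have topV: "topspace (vietoris T) = CL T" unfolding V topology_generated_by_topspace UnSg ..
  define g0 where "g0 n = (SOME x. x \<in> C n)" for n
  have g0G: "g0 \<in> G" unfolding G_def g0_def using Cne by (simp add: some_in_eq)
  have Zne: "Zp \<noteq> {}" using g0G ZpEq by blast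
  have imgb: "img p g \<in> beta_omega" for g using uf_img[OF pu] unfolding beta_omega_def by simp

  have c13: "Zp \<subseteq> X" if pl: "plim (vietoris T) p F s" for F
  proof
    fix z assume "z \<in> Zp"
    then obtain g where gG: "g \<in> G" and z: "z = img p g" using ZpEq by blast
    have gC: "g n \<in> C n" for n using gG unfolding G_def by simp
    show "z \<in> X"
    proof (rule ccontr)
      assume zX: "z \<notin> X"
      have FCL: "F \<in> CL T" using pl topV unfolding plim_def by simp
      then have FX: "F \<subseteq> X" using closedin_subset tsT unfolding CL_def by blast
      define D where "D = range g"
      show False
      proof (cases "F \<inter> bas D = {}")
        case True
        define A where "A = bas (- D) \<inter> X"
        have oA: "openin T A" unfolding A_def using openT2 open_bas by blast
        have "F \<subseteq> A"
        proof
          fix x assume "x \<in> F"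
          then have x: "x \<in> X" "x \<notin> bas D" using FX True by auto
          then have "x \<in> beta_omega" using Xb by auto
          then have "- D \<in> x" using x unfolding bas_def beta_omega_def ultrafilter_on_nat_def by blast
          then show "x \<in> A" using x \<open>x \<in> beta_omega\<close> unfolding A_def bas_def by simp
        qed
        then have "F \<in> {F \<in> CL T. F \<subseteq> A}" using FCL by simp
        then have "{n. s n \<in> {F \<in> CL T. F \<subseteq> A}} \<in> p" using pl gen1[OF oA] unfolding plim_def by blast
        moreover have "{n. s n \<in> {F \<in> CL T. F \<subseteq> A}} = {}"
        proof -
          have "\<not> s n \<subseteq> A" for n
          proof
            assume "s n \<subseteq> A"
            then have "principal (g n) \<in> A" using gC unfolding s_def by auto
            then have "- D \<in> principal (g n)" unfolding A_def bas_def by simp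
            then show False unfolding principal_def D_def by simp
          qed
          then show ?thesis by auto
        qed
        ultimately show False using pemp by metis
      next
        case False
        then obtain x where xF: "x \<in> F" and xD: "x \<in> bas D" by blast
        have xX: "x \<in> X" using xF FX by auto
        then have "x \<noteq> z" using zX by auto
        moreover have "ultrafilter_on_nat x" using xD unfolding bas_def beta_omega_def by simp
        ultimately obtain A where Ax: "A \<in> x" and Az: "A \<notin> z" using uf_neq uf_img[OF pu] z by blast
        define E where "E = A \<inter> D"
        have "E \<in> x" using Ax xD unfolding E_def bas_def beta_omega_def ultrafilter_on_nat_def by blast
        define Ob where "Ob = bas E \<inter> X"
        have oO: "openin T Ob" unfolding Ob_def using openT2 open_bas by blast
        have "x \<in> Ob" unfolding Ob_def bas_def using \<open>E \<in> x\<close> xX xD unfolding bas_def by simp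
        then have "F \<in> {F \<in> CL T. F \<inter> Ob \<noteq> {}}" using FCL xF by auto
        then have P: "{n. s n \<in> {F \<in> CL T. F \<inter> Ob \<noteq> {}}} \<in> p" using pl gen2[OF oO] unfolding plim_def by blast
        have "{n. s n \<in> {F \<in> CL T. F \<inter> Ob \<noteq> {}}} \<subseteq> {n. g n \<in> A}"
        proof
          fix n assume "n \<in> {n. s n \<in> {F \<in> CL T. F \<inter> Ob \<noteq> {}}}"
          then obtain m where m: "m \<in> C n" "principal m \<in> Ob" unfolding s_def by auto
          then have "E \<in> principal m" unfolding Ob_def bas_def by simp
          then have "m \<in> A" "m \<in> D" unfolding principal_def E_def by auto
          then obtain k where k: "m = g k" unfolding D_def by auto
          then have "k = n" using disj gC m(1) by blast
          then show "n \<in> {n. g n \<in> A}" using k \<open>m \<in> A\<close> by simp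
        qed
        then have "A \<in> img p g" using P pmono unfolding img_def by blast
        then show False using Az z by simp
      qed
    qed
  qed

  have c32: "plim (vietoris T) p (T closure_of Zp) s" if ZX: "Zp \<subseteq> X"
  proof -
    define F where "F = T closure_of Zp"
    have "Zp \<subseteq> F" unfolding F_def using ZX tsT closure_of_subset by metis
    then have FCL: "F \<in> CL T" unfolding CL_def F_def using Zne by auto
    have "plim (topology_generated_by Sg) p F s"
    proof (rule plim_gen[OF pu])
      show "F \<in> \<Union>Sg" using FCL UnSg by simp
      fix b assume "b \<in> Sg" and Fb: "F \<in> b"
      then consider (up) A where "openin T A" "b = {F \<in> CL T. F \<subseteq> A}"
        | (down) A where "openin T A" "b = {F \<in> CL T. F \<inter> A \<noteq> {}}" unfolding Sg_def by blast
      then show "{n. s n \<in> b} \<in> p"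
      proof cases
        case up
        obtain W where W: "openin beta_top W" "A = W \<inter> X" using openT up(1) by blast
        have FA: "F \<subseteq> A" using Fb up by simp
        show ?thesis
        proof (rule ccontr)
          assume "{n. s n \<in> b} \<notin> p"
          define M where "M = - {n. s n \<in> b}"
          have Mp: "M \<in> p" unfolding M_def using pcompl \<open>{n. s n \<in> b} \<notin> p\<close> by blast
          have ex: "\<exists>m. m \<in> C n \<and> (n \<in> M \<longrightarrow> principal m \<notin> A)" for n
          proof (cases "n \<in> M")
            case True
            then have "\<not> s n \<subseteq> A" using sCL up(2) unfolding M_def by auto
            then show ?thesis unfolding s_def by auto
          next
            case False then show ?thesis using Cne by auto
          qed
          define g where "g n = (SOME m. m \<in> C n \<and> (n \<in> M \<longrightarrow> principal m \<notin> A))" for n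
          have g: "g n \<in> C n \<and> (n \<in> M \<longrightarrow> principal (g n) \<notin> A)" for n
            unfolding g_def using someI_ex[OF ex] by blast
          then have "g \<in> G" unfolding G_def by simp
          then have "img p g \<in> A" using ZpEq \<open>Zp \<subseteq> F\<close> FA by blast
          then have "img p g \<in> W" using W by simp
          then have "{n. principal (g n) \<in> W} \<in> p"
            using W(1) plim_beta[OF pu, of "img p g" g] unfolding plim_def by blast
          then have "{n. principal (g n) \<in> W} \<inter> M \<noteq> {}" using pint Mp pemp by fastforce
          then obtain n where "principal (g n) \<in> W" "n \<in> M" by blast
          then show False using g[of n] W(2) princX by blast
        qed
      next
        case down
        obtain W where W: "openin beta_top W" "A = W \<inter> X" using openT down(1) by blast
        obtain x where x: "x \<in> F" "x \<in> A" using Fb down by auto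
        then obtain z where "z \<in> Zp" "z \<in> A" using down(1) unfolding F_def in_closure_of by blast
        then obtain g where gG: "g \<in> G" and z: "z = img p g" using ZpEq by blast
        have "{n. principal (g n) \<in> W} \<in> p"
          using W \<open>z \<in> A\<close> z plim_beta[OF pu, of "img p g" g] unfolding plim_def by blast
        moreover have "{n. principal (g n) \<in> W} \<subseteq> {n. s n \<in> b}"
        proof
          fix n assume "n \<in> {n. principal (g n) \<in> W}"
          then have "principal (g n) \<in> s n \<inter> A" using gG W(2) princX unfolding G_def s_def by auto
          then show "n \<in> {n. s n \<in> b}" using sCL down(2) by auto
        qed
        ultimately show ?thesis using pmono by blast
      qed
    qed
    then show ?thesis unfolding V F_def .
  qed

  have part12: "((\<exists>F. plim (vietoris T) p F s) \<longleftrightarrow> plim (vietoris T) p (T closure_of Zp) s)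
     \<and> (plim (vietoris T) p (T closure_of Zp) s \<longleftrightarrow> Zp \<subseteq> X)"
    using c13 c32 by blast

  have part3: "\<exists>f. bij_betw f Zp (UNIV :: real set)"
    if lim: "filterlim (\<lambda>n. card (C n)) at_top sequentially"
  proof -
    have Cpos: "1 \<le> card (C n)" for n using Cne Cfin by (simp add: Suc_leI card_gt_0_iff)
    define kk where "kk n = Max {j. 2 ^ j \<le> card (C n)}" for n
    have kfin: "finite {j. 2 ^ j \<le> card (C n)}" for n
    proof (rule finite_subset)
      show "{j. 2 ^ j \<le> card (C n)} \<subseteq> {..card (C n)}"
      proof
        fix j assume "j \<in> {j. 2 ^ j \<le> card (C n)}"
        then have "2 ^ j \<le> card (C n)" by simp
        moreover have "j < 2 ^ j" by (rule less_exp)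
        ultimately have "j \<le> card (C n)" by linarith
        then show "j \<in> {..card (C n)}" by simp
      qed
    qed simp
    have kne: "0 \<in> {j. 2 ^ j \<le> card (C n)}" for n using Cpos[of n] by simp
    have kk_le: "2 ^ kk n \<le> card (C n)" for n
    proof -
      have "{j. 2 ^ j \<le> card (C n)} \<noteq> {}" using kne[of n] by blast
      then show ?thesis using Max_in[OF kfin] unfolding kk_def by blast
    qed
    have kk_ge: "2 ^ j \<le> card (C n) \<Longrightarrow> j \<le> kk n" for j n
      unfolding kk_def using Max_ge[OF kfin] by blast
    have ev: "\<exists>N. \<forall>n\<ge>N. j < kk n" for j
    proof -
      have "eventually (\<lambda>n. 2 ^ Suc j \<le> card (C n)) sequentially"
        using lim unfolding filterlim_at_top by blast
      then obtain N where N: "\<And>n. n \<ge> N \<Longrightarrow> 2 ^ Suc j \<le> card (C n)"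
        unfolding eventually_sequentially by blast
      have "j < kk n" if "n \<ge> N" for n using kk_ge[OF N[OF that]] by simp
      then show ?thesis by blast
    qed
    define en where "en n = (SOME e. bij_betw e {0..<card (C n)} (C n))" for n
    have en: "bij_betw (en n) {0..<card (C n)} (C n)" for n
      unfolding en_def using someI_ex[OF ex_bij_betw_nat_finite[OF Cfin[of n]]] .
    define hh where "hh S n = en n (set_encode (S \<inter> {..<kk n}))" for S :: "nat set" and n
    have code_lt: "set_encode (S \<inter> {..<kk n}) < card (C n)" for S n
      using set_encode_bound[of S "kk n"] kk_le[of n] by linarith
    have hhC: "hh S n \<in> C n" for S n
      unfolding hh_def using bij_betwE[OF en[of n]] code_lt[of S n] by simp
    have hhG: "hh S \<in> G" for S unfolding G_def using hhC by simp
    have dist: "img p (hh S) \<noteq> img p (hh S')" if "S \<noteq> S'" for S S'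
    proof -
      obtain j where j: "(j \<in> S) \<noteq> (j \<in> S')" using \<open>S \<noteq> S'\<close> by blast
      obtain N where N: "\<And>n. n \<ge> N \<Longrightarrow> j < kk n" using ev[of j] by blast
      have "{N..} \<subseteq> {n. hh S n \<noteq> hh S' n}"
      proof
        fix n assume "n \<in> {N..}"
        then have jn: "j < kk n" using N by simp
        then have "S \<inter> {..<kk n} \<noteq> S' \<inter> {..<kk n}" using j by blast
        then have ne: "set_encode (S \<inter> {..<kk n}) \<noteq> set_encode (S' \<inter> {..<kk n})"
          by (simp add: set_encode_eq)
        have "inj_on (en n) {0..<card (C n)}" using en bij_betw_imp_inj_on by blast
        then have "hh S n \<noteq> hh S' n"
          unfolding hh_def using ne code_lt[of S n] code_lt[of S' n] by (simp add: inj_on_eq_iff)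
        then show "n \<in> {n. hh S n \<noteq> hh S' n}" by simp
      qed
      then have "finite (- {n. hh S n \<noteq> hh S' n})"
      proof -
        assume h: "{N..} \<subseteq> {n. hh S n \<noteq> hh S' n}"
        have "- {n. hh S n \<noteq> hh S' n} \<subseteq> {..<N}" 
        proof
          fix x assume "x \<in> - {n. hh S n \<noteq> hh S' n}"
          then have "x \<notin> {N..}" using h by blast
          then show "x \<in> {..<N}" by simp
        qed
        then show ?thesis using finite_subset by blast
      qed
      then have Mp: "{n. hh S n \<noteq> hh S' n} \<in> p" using free_cofinite[OF fp] by blast
      show ?thesis
      proof (rule img_distinct[where p=p and C=C and h="hh S" and h'="hh S'"])
        show "ultrafilter_on_nat p" by (rule pu)
        show "\<And>m n. m \<noteq> n \<Longrightarrow> C m \<inter> C n = {}" by (rule disj)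
        show "\<And>n. hh S n \<in> C n" by (rule hhC)
        show "\<And>n. hh S' n \<in> C n" by (rule hhC)
        show "{n. hh S n \<noteq> hh S' n} \<in> p" by (rule Mp)
      qed
    qed
    have low: "(UNIV :: nat set set) \<lesssim> Zp"
      unfolding lepoll_def
    proof (intro exI conjI)
      show "inj_on (\<lambda>S. img p (hh S)) UNIV" using dist by (meson inj_onI)
      show "(\<lambda>S. img p (hh S)) ` UNIV \<subseteq> Zp" using ZpEq hhG by blast
    qed
    have up: "Zp \<lesssim> (UNIV :: nat set set)"
    proof -
      have "Zp \<lesssim> G" unfolding ZpEq by (rule image_lepoll)
      also have "G \<lesssim> (UNIV :: (nat \<Rightarrow> nat) set)" by (rule subset_imp_lepoll) simp
      also have "\<dots> \<lesssim> (UNIV :: nat set set)" by (rule graph_lepoll)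
      finally show ?thesis .
    qed
    have "Zp \<approx> (UNIV :: nat set set)" using up low by (rule lepoll_antisym)
    then have "Zp \<approx> (UNIV :: real set)" using nat_sets_eqpoll_reals by (rule eqpoll_trans)
    then show ?thesis unfolding eqpoll_def .
  qed
  have s_eq: "(\<lambda>n. principal ` C n) = s" unfolding s_def by simp
  have part3': "(\<forall>n. card (C n) \<le> card (C (Suc n))) \<and> filterlim (\<lambda>n. card (C n)) at_top sequentially
            \<longrightarrow> (\<exists>f. bij_betw f Zp (UNIV :: real set))" using part3 by blast
  show ?thesis unfolding T_def[symmetric] s_eq using part12 part3' by (simp only:)
qed


end
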